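(* Let $G=(V,E)$ be a finite simple graph with $|E|=2|V|-3$. Then the graphic matroid of $G$ has a rainbow circuit-free coloring using each color at most twice if and only if $G$ can be constructed from $K_2$ (a single edge) by a sequence of (H0) operations.
   Context: The graphic matroid of $G$ has ground set $E$, independent sets being the edge sets of forests; its circuits are the edge sets of cycles. A coloring of $E$ is a partition into nonempty color classes; it is rainbow circuit-free if no cycle of $G$ has all its edges of pairwise different colors. The (H0) operation on a graph adds a new vertex $z$ together with edges $uz$ and $vz$, where $u,v$ are two distinct already existing vertices. *)

theory Defs
  imports Main
begin

definition simple_graph :: "'a set \<Rightarrow> 'a set set \<Rightarrow> bool" where
  "simple_graph V E \<longleftrightarrow> finite V \<and>
     (\<forall>e\<in>E. \<exists>u v. u \<in> V \<and> v \<in> V \<and> u \<noteq> v \<and> e = {u, v})"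

definition cycle_edges :: "'a list \<Rightarrow> 'a set set" where
  "cycle_edges vs = {{vs ! i, vs ! ((i + 1) mod length vs)} | i. i < length vs}"

text \<open>C is the edge set of a cycle of the graph (a circuit of the graphic matroid).\<close>
definition is_cycle :: "'a set set \<Rightarrow> 'a set set \<Rightarrow> bool" where
  "is_cycle E C \<longleftrightarrow> (\<exists>vs. distinct vs \<and> length vs \<ge> 3 \<and>
      cycle_edges vs \<subseteq> E \<and> C = cycle_edges vs)"

text \<open>A coloring of E: a partition of E into nonempty colour classes.\<close>
definition coloring :: "'a set set \<Rightarrow> 'a set set set \<Rightarrow> bool" where
  "coloring E P \<longleftrightarrow> \<Union>P = E \<and> {} \<notin> P \<and>
     (\<forall>X\<in>P. \<forall>Y\<in>P. X \<noteq> Y \<longrightarrow> X \<inter> Y = {})"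

definition rainbow_circuit_free :: "'a set set \<Rightarrow> 'a set set set \<Rightarrow> bool" where
  "rainbow_circuit_free E P \<longleftrightarrow>
     \<not> (\<exists>C. is_cycle E C \<and> (\<forall>X\<in>P. card (C \<inter> X) \<le> 1))"

inductive H0_constructible :: "'a set \<Rightarrow> 'a set set \<Rightarrow> bool" where
  K2: "u \<noteq> v \<Longrightarrow> H0_constructible {u, v} {{u, v}}"
| H0: "H0_constructible V E \<Longrightarrow> u \<in> V \<Longrightarrow> v \<in> V \<Longrightarrow> u \<noteq> v \<Longrightarrow> z \<notin> V \<Longrightarrow>
       H0_constructible (insert z V) (E \<union> {{u, z}, {v, z}})"

end

theory Submission
  imports Defs
begin

definition edges2 :: "'a set set \<Rightarrow> bool" where
  "edges2 F \<longleftrightarrow> (\<forall>e\<in>F. \<exists>u v. u \<noteq> v \<and> e = {u, v})"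

definition nocyc :: "'a set set \<Rightarrow> bool" where
  "nocyc F \<longleftrightarrow> (\<forall>vs. distinct vs \<longrightarrow> 3 \<le> length vs \<longrightarrow> \<not> cycle_edges vs \<subseteq> F)"

lemma edges2D: "edges2 F \<Longrightarrow> e \<in> F \<Longrightarrow> \<exists>u v. u \<noteq> v \<and> e = {u, v}"
  unfolding edges2_def by blast

lemma edge_other: "e = {p,q} \<Longrightarrow> p \<noteq> q \<Longrightarrow> v \<in> e \<Longrightarrow> \<exists>x. x \<noteq> v \<and> e = {v,x}"
  by auto

lemma leaf:
  assumes fin: "finite F" and e2: "edges2 F" and nc: "nocyc F" and ne: "F \<noteq> {}"
  shows "\<exists>v e. e \<in> F \<and> v \<in> e \<and> (\<forall>e'\<in>F. v \<in> e' \<longrightarrow> e' = e)"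
proof -
  define U where "U = \<Union>F"
  have "\<forall>e\<in>F. finite e" using e2 by (auto dest: edges2D)
  then have finU: "finite U" unfolding U_def using fin by blast
  define S where "S = {vs. distinct vs \<and> set vs \<subseteq> U \<and> 2 \<le> length vs \<and>
        (\<forall>i. Suc i < length vs \<longrightarrow> {vs!i, vs!Suc i} \<in> F)}"
  have "S \<subseteq> {xs. set xs \<subseteq> U \<and> length xs \<le> card U}"
    unfolding S_def using finU by (auto simp flip: distinct_card intro: card_mono)
  hence finS: "finite S" using finite_lists_length_le[OF finU] by (rule finite_subset)
  obtain e0 where "e0 \<in> F" using ne by blast
  then obtain a b where ab: "a \<noteq> b" "{a,b} \<in> F" using edges2D[OF e2] by metis
  have "[a,b] \<in> S" unfolding S_def U_def
  proof (intro CollectI conjI allI impI)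
    fix i assume "Suc i < length [a,b]"
    then have "i = 0" by simp
    then show "{[a, b] ! i, [a, b] ! Suc i} \<in> F" using ab by simp
  qed (use ab in auto)
  hence neS: "S \<noteq> {}" by auto
  define m where "m = Max (length ` S)"
  have "m \<in> length ` S" unfolding m_def using finS neS by (intro Max_in) auto
  then obtain vs where vs: "vs \<in> S" "length vs = m" by auto
  have maxl: "\<And>ws. ws \<in> S \<Longrightarrow> length ws \<le> m" unfolding m_def using finS by auto
  have vsd: "distinct vs" and vsU: "set vs \<subseteq> U" and vs2: "2 \<le> length vs"
    and vsF: "\<And>i. Suc i < length vs \<Longrightarrow> {vs!i, vs!Suc i} \<in> F"
    using vs(1) unfolding S_def by auto
  define v where "v = vs!0"
  define e where "e = {vs!0, vs!1}"
  have eF: "e \<in> F" unfolding e_def using vsF[of 0] vs2 by simp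
  have "\<forall>e'\<in>F. v \<in> e' \<longrightarrow> e' = e"
  proof (intro ballI impI, rule ccontr)
    fix e' assume e'F: "e' \<in> F" and ve': "v \<in> e'" and ne': "e' \<noteq> e"
    obtain p q where "p \<noteq> q" "e' = {p,q}" using edges2D[OF e2 e'F] by blast
    then obtain x where x: "e' = {v, x}" "x \<noteq> v" using edge_other[of e' p q v] ve' by blast
    have x1: "x \<noteq> vs!1" using ne' x unfolding e_def v_def by auto
    show False
    proof (cases "x \<in> set vs")
      case False
      have xvs: "x # vs \<in> S" unfolding S_def
      proof (intro CollectI conjI allI impI)
        show "distinct (x # vs)" using False vsd by simp
        show "set (x # vs) \<subseteq> U" using vsU e'F x unfolding U_def by auto
        show "2 \<le> length (x # vs)" using vs2 by simp
        fix i assume il: "Suc i < length (x # vs)"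
        show "{(x # vs) ! i, (x # vs) ! Suc i} \<in> F"
        proof (cases i)
          case 0
          then show ?thesis using e'F x unfolding v_def by (simp add: insert_commute)
        next
          case (Suc k)
          then show ?thesis using vsF[of k] il by simp
        qed
      qed
      show False using maxl[OF xvs] vs(2) by simp
    next
      case True
      then obtain j where j: "j < length vs" "vs!j = x" by (auto simp: in_set_conv_nth)
      have j0: "j \<noteq> 0" using j x unfolding v_def by (metis)
      have j1: "j \<noteq> 1" using j x1 by auto
      define ws where "ws = take (Suc j) vs"
      have lws: "length ws = Suc j" unfolding ws_def using j by simp
      have "cycle_edges ws \<subseteq> F"
      proof
        fix c assume "c \<in> cycle_edges ws"
        then obtain i where i: "i < Suc j" "c = {ws!i, ws!((i+1) mod Suc j)}"
          unfolding cycle_edges_def lws by auto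
        show "c \<in> F"
        proof (cases "i < j")
          case True
          then have "c = {vs!i, vs!Suc i}" using i unfolding ws_def by simp
          then show ?thesis using True vsF[of i] j by simp
        next
          case False
          then have "i = j" using i by simp
          then have "c = {x, v}" using i j unfolding ws_def v_def by simp
          then show ?thesis using e'F x by (simp add: insert_commute)
        qed
      qed
      moreover have "distinct ws" unfolding ws_def using vsd by simp
      moreover have "3 \<le> length ws" using lws j0 j1 by simp
      ultimately show False using nc unfolding nocyc_def by blast
    qed
  qed
  moreover have "v \<in> e" unfolding v_def e_def by simp
  ultimately show ?thesis using eF by blast
qed

lemma forest_card:
  "finite F \<Longrightarrow> edges2 F \<Longrightarrow> nocyc F \<Longrightarrow> F \<noteq> {} \<Longrightarrow> card F < card (\<Union>F)"
proof (induction "card F" arbitrary: F rule: less_induct)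
  case less
  obtain v e where ve: "e \<in> F" "v \<in> e" and uq: "\<And>e'. e' \<in> F \<Longrightarrow> v \<in> e' \<Longrightarrow> e' = e"
    using leaf[OF less.prems] by blast
  have finU: "finite (\<Union>F)" using less.prems(1,2) unfolding edges2_def by auto
  show ?case
  proof (cases "F - {e} = {}")
    case True
    then have "F = {e}" using ve(1) by blast
    moreover obtain a b where "e = {a,b}" "a \<noteq> b" using less.prems(2) ve(1) unfolding edges2_def by blast
    ultimately show ?thesis by simp
  next
    case False
    have "card (F - {e}) < card F" using ve(1) less.prems(1) by (intro card_Diff1_less)
    moreover have "edges2 (F - {e})" using less.prems(2) unfolding edges2_def by auto
    moreover have "nocyc (F - {e})" using less.prems(3) unfolding nocyc_def by (meson Diff_subset order_trans)
    ultimately have ih: "card (F - {e}) < card (\<Union>(F - {e}))"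
      using less.hyps[of "F - {e}"] less.prems(1) False by blast
    have "\<Union>(F - {e}) \<subseteq> \<Union>F - {v}" using uq by blast
    hence "card (\<Union>(F - {e})) \<le> card (\<Union>F - {v})" using finU by (intro card_mono) auto
    also have "\<dots> = card (\<Union>F) - 1" using ve finU by (metis UnionI card_Diff_singleton)
    finally have "card (\<Union>(F - {e})) \<le> card (\<Union>F) - 1" .
    moreover have "card F = card (F - {e}) + 1" using ve(1) less.prems(1)
      by (metis card_Diff1_less card_Diff_singleton Suc_eq_plus1 Suc_pred' zero_less_iff_neq_zero less_nat_zero_code)
    ultimately show ?thesis using ih by linarith
  qed
qed



lemma sg_facts:
  assumes "simple_graph V E"
  shows "finite V" "finite E" "\<And>e. e \<in> E \<Longrightarrow> e \<subseteq> V" "edges2 E"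
proof -
  have d: "\<forall>e\<in>E. \<exists>u v. u \<in> V \<and> v \<in> V \<and> u \<noteq> v \<and> e = {u, v}"
    using assms unfolding simple_graph_def by simp
  show fv: "finite V" using assms unfolding simple_graph_def by simp
  show sub: "\<And>e. e \<in> E \<Longrightarrow> e \<subseteq> V"
  proof -
    fix e assume "e \<in> E"
    then obtain u v where "u \<in> V" "v \<in> V" "e = {u, v}" using d by metis
    then show "e \<subseteq> V" by simp
  qed
  have "E \<subseteq> Pow V" using sub by blast
  then show "finite E" using fv by (meson finite_Pow_iff finite_subset)
  show "edges2 E" unfolding edges2_def
  proof
    fix e assume "e \<in> E"
    then obtain u v where "u \<noteq> v" "e = {u, v}" using d by metis
    then show "\<exists>u v. u \<noteq> v \<and> e = {u, v}" by blast
  qed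
qed

lemma col_sub: "coloring E P \<Longrightarrow> X \<in> P \<Longrightarrow> X \<subseteq> E"
  unfolding coloring_def by blast

lemma col_eq: "coloring E P \<Longrightarrow> X \<in> P \<Longrightarrow> Y \<in> P \<Longrightarrow> e \<in> X \<Longrightarrow> e \<in> Y \<Longrightarrow> X = Y"
  unfolding coloring_def by blast

lemma col_fin: "coloring E P \<Longrightarrow> finite E \<Longrightarrow> finite P"
proof -
  assume c: "coloring E P" and f: "finite E"
  have "P \<subseteq> Pow E" using col_sub[OF c] by blast
  then show "finite P" using f by (meson finite_Pow_iff finite_subset)
qed

lemma transversal:
  assumes sg: "simple_graph V E" and col: "coloring E P" and rf: "rainbow_circuit_free E P"
    and pk: "\<forall>X\<in>P. pick X \<in> X" and ne: "P \<noteq> {}"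
  shows "card P < card (\<Union>(pick ` P))"
proof -
  define T where "T = pick ` P"
  have TE: "T \<subseteq> E" unfolding T_def using pk col_sub[OF col] by blast
  have finT: "finite T" using TE sg_facts(2)[OF sg] finite_subset by blast
  have inj: "inj_on pick P"
  proof (rule inj_onI)
    fix X Y assume "X \<in> P" "Y \<in> P" "pick X = pick Y"
    then show "X = Y" using col_eq[OF col, of X Y "pick X"] pk by metis
  qed
  have cardT: "card T = card P" unfolding T_def using inj by (simp add: card_image)
  have e2: "edges2 T" using TE sg_facts(4)[OF sg] unfolding edges2_def by (meson subsetD)
  have nc: "nocyc T" unfolding nocyc_def
  proof (intro allI impI notI)
    fix vs assume d: "distinct vs" and l: "3 \<le> length vs" and sub: "cycle_edges vs \<subseteq> T"
    define C where "C = cycle_edges vs"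
    have cyc: "is_cycle E C" unfolding is_cycle_def C_def using d l sub TE by blast
    have finC: "finite C" using sub finT unfolding C_def using finite_subset by blast
    have "\<forall>X\<in>P. card (C \<inter> X) \<le> 1"
    proof
      fix X assume XP: "X \<in> P"
      have "C \<inter> X \<subseteq> {pick X}"
      proof
        fix c assume cc: "c \<in> C \<inter> X"
        then have "c \<in> T" using sub unfolding C_def by blast
        then obtain Y where Y: "Y \<in> P" "c = pick Y" unfolding T_def by blast
        then have "X = Y" using col_eq[OF col XP Y(1), of c] cc pk by blast
        then show "c \<in> {pick X}" using Y by simp
      qed
      then have "card (C \<inter> X) \<le> card {pick X}" by (intro card_mono) auto
      then show "card (C \<inter> X) \<le> 1" by simp
    qed
    then show False using rf cyc unfolding rainbow_circuit_free_def by blast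
  qed
  have "T \<noteq> {}" unfolding T_def using ne by simp
  then have "card T < card (\<Union>T)" using forest_card[OF finT e2 nc] by blast
  then show ?thesis using cardT unfolding T_def by simp
qed



lemma common2:
  assumes "e1 = {a,b}" "e2 = {c,d}" "e1 \<noteq> e2" "x \<in> e1" "x \<in> e2" "y \<in> e1" "y \<in> e2"
  shows "x = y"
  using assms by auto

lemma sum_ge_eq:
  fixes f :: "'b \<Rightarrow> nat"
  assumes "finite A" "\<forall>x\<in>A. c \<le> f x" "sum f A \<le> card A * c" "x \<in> A"
  shows "f x = c"
proof (rule ccontr)
  assume "f x \<noteq> c"
  then have "c < f x" using assms(2,4) by force
  then have "sum (\<lambda>_. c) A < sum f A"
    using assms(1,2,4) by (intro sum_strict_mono_ex1) auto
  then show False using assms(3) by simp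
qed

lemma sum_le_eq:
  fixes f :: "'b \<Rightarrow> nat"
  assumes "finite A" "\<forall>x\<in>A. f x \<le> c" "card A * c \<le> sum f A" "x \<in> A"
  shows "f x = c"
proof (rule ccontr)
  assume "f x \<noteq> c"
  then have "f x < c" using assms(2,4) by force
  then have "sum f A < sum (\<lambda>_. c) A"
    using assms(1,2,4) by (intro sum_strict_mono_ex1) auto
  then show False using assms(3) by simp
qed

lemma counting:
  assumes sg: "simple_graph V E" and col: "coloring E P" and rf: "rainbow_circuit_free E P"
    and le2: "\<forall>X\<in>P. card X \<le> 2" and ce: "card E + 3 = 2 * card V"
  shows "\<forall>x\<in>V. \<forall>X\<in>P. \<forall>Y\<in>P. (\<forall>e\<in>X. x\<in>e) \<longrightarrow> (\<forall>e\<in>Y. x\<in>e) \<longrightarrow> X = Y"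
    and "\<forall>X\<in>P. \<exists>x\<in>V. \<forall>e\<in>X. x\<in>e"
    and "card P + 1 = card V"
proof -
  have finV: "finite V" and finE: "finite E" and eV: "\<And>e. e \<in> E \<Longrightarrow> e \<subseteq> V"
    and e2: "edges2 E" using sg_facts[OF sg] by auto
  have finP: "finite P" using col_fin[OF col finE] .
  have UP: "\<Union>P = E" and neX: "{} \<notin> P" and dj: "\<forall>X\<in>P. \<forall>Y\<in>P. X \<noteq> Y \<longrightarrow> X \<inter> Y = {}"
    using col unfolding coloring_def by auto
  have finX: "\<And>X. X \<in> P \<Longrightarrow> finite X" using col_sub[OF col] finE finite_subset by blast
  have sumE: "card E = sum card P"
  proof -
    have "pairwise disjnt P" using dj unfolding pairwise_def disjnt_def by blast
    then show ?thesis using card_Union_disjoint[of P] finX UP by simp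
  qed
  have neP: "P \<noteq> {}"
  proof
    assume "P = {}"
    then have "E = {}" using UP by simp
    then have "2 * card V = 3" using ce by simp
    then show False by presburger
  qed
  have cE2: "card E \<le> 2 * card P"
  proof -
    have "sum card P \<le> sum (\<lambda>_. 2) P" using le2 by (intro sum_mono) auto
    then show ?thesis using sumE by simp
  qed
  have kle: "card P < card V"
  proof -
    define pk where "pk = (\<lambda>X::'a set set. SOME e. e \<in> X)"
    have pk: "\<forall>X\<in>P. pk X \<in> X" unfolding pk_def using neX by (metis ex_in_conv someI_ex)
    have "\<Union>(pk ` P) \<subseteq> V" using pk col_sub[OF col] eV by blast
    then have "card (\<Union>(pk ` P)) \<le> card V" using finV by (intro card_mono)
    then show ?thesis using transversal[OF sg col rf pk neP] by linarith
  qed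
  have ex: "\<forall>x\<in>V. \<exists>X\<in>P. \<forall>e\<in>X. x\<in>e"
  proof (rule ballI, rule ccontr)
    fix x assume xV: "x \<in> V" and nx: "\<not> (\<exists>X\<in>P. \<forall>e\<in>X. x \<in> e)"
    define pk where "pk = (\<lambda>X::'a set set. SOME e. e \<in> X \<and> x \<notin> e)"
    have pk: "\<forall>X\<in>P. pk X \<in> X \<and> x \<notin> pk X" unfolding pk_def
    proof
      fix X assume "X \<in> P"
      then have "\<exists>e. e \<in> X \<and> x \<notin> e" using nx by blast
      then show "(SOME e. e \<in> X \<and> x \<notin> e) \<in> X \<and> x \<notin> (SOME e. e \<in> X \<and> x \<notin> e)"
        by (rule someI_ex)
    qed
    have "\<Union>(pk ` P) \<subseteq> V - {x}" using pk col_sub[OF col] eV by blast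
    then have "card (\<Union>(pk ` P)) \<le> card (V - {x})" using finV by (intro card_mono) auto
    also have "\<dots> = card V - 1" using xV by simp
    finally have "card P < card V - 1" using transversal[OF sg col rf _ neP, of pk] pk by fastforce
    then show False using cE2 ce by linarith
  qed
  define t where "t = (\<lambda>x. card {X\<in>P. \<forall>e\<in>X. x\<in>e})"
  define m where "m = (\<lambda>X. card {x\<in>V. \<forall>e\<in>X. x\<in>e})"
  have dbl: "sum t V = sum m P"
  proof -
    have "sum t V = (\<Sum>x\<in>V. \<Sum>X\<in>P. if (\<forall>e\<in>X. x\<in>e) then 1 else 0)"
      unfolding t_def using finP by (simp add: sum.inter_filter[symmetric])
    also have "\<dots> = (\<Sum>X\<in>P. \<Sum>x\<in>V. if (\<forall>e\<in>X. x\<in>e) then 1 else 0)"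
      by (rule sum.swap)
    also have "\<dots> = sum m P"
      unfolding m_def using finV by (simp add: sum.inter_filter[symmetric])
    finally show ?thesis .
  qed
  have t1: "\<forall>x\<in>V. 1 \<le> t x"
  proof
    fix x assume "x \<in> V"
    then obtain X where "X \<in> P" "\<forall>e\<in>X. x\<in>e" using ex by blast
    then have "{X\<in>P. \<forall>e\<in>X. x\<in>e} \<noteq> {}" by blast
    then show "1 \<le> t x" unfolding t_def using finP by (simp add: Suc_le_eq card_gt_0_iff)
  qed
  have m3: "\<forall>X\<in>P. m X + card X \<le> 3"
  proof
    fix X assume XP: "X \<in> P"
    have "X \<noteq> {}" using XP neX by blast
    then have c0: "card X \<noteq> 0" using finX[OF XP] by simp
    have XE: "X \<subseteq> E" using col_sub[OF col XP] .
    show "m X + card X \<le> 3"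
    proof (cases "card X = 1")
      case True
      then obtain e0 where X: "X = {e0}" by (meson card_1_singletonE)
      then have "e0 \<in> E" using XE by simp
      then obtain u v where uv: "u \<noteq> v" "e0 = {u,v}" using edges2D[OF e2] by metis
      have "{x\<in>V. \<forall>e\<in>X. x\<in>e} \<subseteq> e0" using X by blast
      then have "m X \<le> card e0" unfolding m_def using uv by (intro card_mono) auto
      then show ?thesis using uv True by simp
    next
      case False
      then have "card X = 2" using c0 le2 XP by force
      then obtain e1 e3 where X: "X = {e1, e3}" "e1 \<noteq> e3" by (auto simp: card_2_iff)
      obtain a b where ab: "e1 = {a,b}" using edges2D[OF e2, of e1] XE X by blast
      obtain c d where cd: "e3 = {c,d}" using edges2D[OF e2, of e3] XE X by blast
      have "card {x\<in>V. \<forall>e\<in>X. x\<in>e} \<le> Suc 0"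
        using finV
      proof (subst card_le_Suc0_iff_eq, simp, intro ballI)
        fix x y assume "x \<in> {x\<in>V. \<forall>e\<in>X. x\<in>e}" "y \<in> {x\<in>V. \<forall>e\<in>X. x\<in>e}"
        then have "x \<in> e1" "x \<in> e3" "y \<in> e1" "y \<in> e3" using X by auto
        then show "x = y" using common2[OF ab cd X(2)] by blast
      qed
      then show ?thesis unfolding m_def using \<open>card X = 2\<close> by simp
    qed
  qed
  have "card V \<le> sum t V"
  proof -
    have "sum (\<lambda>_. 1) V \<le> sum t V" using t1 by (intro sum_mono) auto
    then show ?thesis by simp
  qed
  moreover have "sum (\<lambda>X. m X + card X) P \<le> card P * 3"
  proof -
    have "sum (\<lambda>X. m X + card X) P \<le> sum (\<lambda>_. 3) P" using m3 by (intro sum_mono) auto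
    then show ?thesis by simp
  qed
  moreover have "sum (\<lambda>X. m X + card X) P = sum m P + card E"
    using sumE by (simp add: sum.distrib)
  ultimately have A: "sum t V \<le> card V * 1" and B: "card P * 3 \<le> sum (\<lambda>X. m X + card X) P"
    and kk: "card P + 1 = card V"
    using dbl kle ce by linarith+
  have tt: "\<forall>x\<in>V. t x = 1" using sum_ge_eq[OF finV t1 A] by blast
  have mm: "\<forall>X\<in>P. m X + card X = 3" using sum_le_eq[OF finP m3 B] by blast
  show "\<forall>x\<in>V. \<forall>X\<in>P. \<forall>Y\<in>P. (\<forall>e\<in>X. x\<in>e) \<longrightarrow> (\<forall>e\<in>Y. x\<in>e) \<longrightarrow> X = Y"
  proof (intro ballI impI)
    fix x X Y assume "x \<in> V" "X \<in> P" "Y \<in> P" "\<forall>e\<in>X. x\<in>e" "\<forall>e\<in>Y. x\<in>e"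
    moreover have "card {X\<in>P. \<forall>e\<in>X. x\<in>e} \<le> Suc 0" using tt \<open>x \<in> V\<close> unfolding t_def by simp
    ultimately show "X = Y" using finP by (subst (asm) card_le_Suc0_iff_eq) auto
  qed
  show "\<forall>X\<in>P. \<exists>x\<in>V. \<forall>e\<in>X. x\<in>e"
  proof
    fix X assume XP: "X \<in> P"
    then have "m X \<noteq> 0" using mm le2 by fastforce
    then have "{x\<in>V. \<forall>e\<in>X. x\<in>e} \<noteq> {}" unfolding m_def by (metis card.empty)
    then show "\<exists>x\<in>V. \<forall>e\<in>X. x\<in>e" by blast
  qed
  show "card P + 1 = card V" using kk .
qed



lemma fp: "(f^^m) ((f^^n) x) = (f^^(m+n)) x"
  by (simp add: funpow_add)

lemma periodic:
  assumes fin: "finite W" and w0: "w0 \<in> W" and fW: "\<forall>x\<in>W. f x \<in> W"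
  shows "\<exists>w\<in>W. \<exists>p>0. (f^^p) w = w \<and> (\<forall>q. 0<q \<longrightarrow> q<p \<longrightarrow> (f^^q) w \<noteq> w)"
proof -
  have itW: "\<And>i. (f^^i) w0 \<in> W"
  proof -
    fix i show "(f^^i) w0 \<in> W" by (induction i) (use w0 fW in auto)
  qed
  have "\<not> inj_on (\<lambda>i. (f^^i) w0) {0..card W}"
  proof
    assume inj: "inj_on (\<lambda>i. (f^^i) w0) {0..card W}"
    have "(\<lambda>i. (f^^i) w0) ` {0..card W} \<subseteq> W" using itW by blast
    then have "card ((\<lambda>i. (f^^i) w0) ` {0..card W}) \<le> card W" using fin by (intro card_mono)
    then show False using card_image[OF inj] by simp
  qed
  then obtain i j where ij: "i \<noteq> j" "(f^^i) w0 = (f^^j) w0" unfolding inj_on_def by blast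
  then obtain a b where ab: "a < b" "(f^^a) w0 = (f^^b) w0" by (metis linorder_neqE_nat)
  define w1 where "w1 = (f^^a) w0"
  have "(f^^(b-a)) w1 = (f^^(b - a + a)) w0" unfolding w1_def by (rule fp)
  also have "\<dots> = w1" using ab unfolding w1_def by simp
  finally have per: "(f^^(b-a)) w1 = w1" .
  define p where "p = (LEAST p. 0 < p \<and> (f^^p) w1 = w1)"
  have P: "0 < p \<and> (f^^p) w1 = w1" unfolding p_def
    by (rule LeastI[of _ "b - a"]) (use per ab in simp)
  have M: "\<forall>q. 0<q \<longrightarrow> q<p \<longrightarrow> (f^^q) w1 \<noteq> w1"
    using not_less_Least unfolding p_def by blast
  show ?thesis using P M itW[of a] unfolding w1_def by blast
qed

lemma period_distinct:
  assumes per: "(f^^p) w = w" and mn: "\<forall>q. 0<q \<longrightarrow> q<p \<longrightarrow> (f^^q) w \<noteq> w"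
  shows "distinct (map (\<lambda>i. (f^^i) w) [0..<p])"
proof -
  have key: "False" if ij: "i < j" "j < p" "(f^^i) w = (f^^j) w" for i j
  proof -
    have "(f^^(j-i)) w = (f^^(j-i)) ((f^^p) w)" using per by simp
    also have "\<dots> = (f^^(j - i + p)) w" by (rule fp)
    also have "j - i + p = (p - i) + j" using ij by simp
    also have "(f^^((p - i) + j)) w = (f^^(p-i)) ((f^^j) w)" by (rule fp[symmetric])
    also have "\<dots> = (f^^(p-i)) ((f^^i) w)" using ij by simp
    also have "\<dots> = (f^^(p - i + i)) w" by (rule fp)
    also have "p - i + i = p" using ij by simp
    finally have "(f^^(j-i)) w = w" using per by simp
    then show False using mn ij by (metis zero_less_diff diff_less_mono2 less_imp_diff_less)
  qed
  show ?thesis unfolding distinct_map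
  proof
    show "inj_on (\<lambda>i. (f ^^ i) w) (set [0..<p])"
    proof (rule inj_onI)
      fix i j assume "i \<in> set [0..<p]" "j \<in> set [0..<p]" "(f ^^ i) w = (f ^^ j) w"
      then show "i = j" using key by (metis atLeastLessThan_iff linorder_neqE_nat set_upt)
    qed
  qed simp
qed

lemma period_next:
  assumes per: "(f^^p) w = w" and i: "i < p"
  shows "(f^^((i+1) mod p)) w = f ((f^^i) w)"
proof (cases "i + 1 < p")
  case True
  then show ?thesis by simp
next
  case False
  then have "i + 1 = p" using i by simp
  then show ?thesis using per by (metis funpow.simps(2) comp_apply mod_self funpow_0 Suc_eq_plus1)
qed



lemma edge_pair: "e = {a,b} \<Longrightarrow> a \<noteq> b \<Longrightarrow> x \<in> e \<Longrightarrow> y \<in> e \<Longrightarrow> x \<noteq> y \<Longrightarrow> e = {x, y}"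
  by auto

lemma sm: "(i::nat) < p \<Longrightarrow> (i+1) mod p = (if i + 1 < p then i + 1 else 0)"
proof (cases "i + 1 < p")
  case False
  assume "i < p"
  then have "i + 1 = p" using False by simp
  then show ?thesis by simp
qed simp
lemma suc_mod_inj: "(i::nat) < p \<Longrightarrow> j < p \<Longrightarrow> (i+1) mod p = (j+1) mod p \<Longrightarrow> i = j"
  using sm[of i p] sm[of j p] by (auto split: if_splits)

lemma find_vertex:
  assumes sg: "simple_graph V E" and col: "coloring E P" and rf: "rainbow_circuit_free E P"
    and le2: "\<forall>X\<in>P. card X \<le> 2"
    and uniq: "\<forall>x\<in>V. \<forall>X\<in>P. \<forall>Y\<in>P. (\<forall>e\<in>X. x\<in>e) \<longrightarrow> (\<forall>e\<in>Y. x\<in>e) \<longrightarrow> X = Y"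
    and cen: "\<forall>X\<in>P. \<exists>x\<in>V. \<forall>e\<in>X. x\<in>e"
    and pair: "\<exists>X\<in>P. card X = 2"
  shows "\<exists>w\<in>V. \<exists>X\<in>P. card X = 2 \<and> {e\<in>E. w\<in>e} = X"
proof (rule ccontr)
  assume nf: "\<not> ?thesis"
  have finV: "finite V" and finE: "finite E" and e2: "edges2 E" using sg_facts[OF sg] by auto
  have UP: "\<Union>P = E" and neX: "{} \<notin> P" using col unfolding coloring_def by auto
  have finX: "\<And>X. X \<in> P \<Longrightarrow> finite X" using col_sub[OF col] finE finite_subset by blast
  have pcen: "x = y" if h: "X \<in> P" "card X = 2" "\<forall>e\<in>X. x\<in>e" "\<forall>e\<in>X. y\<in>e" for X x y
  proof -
    obtain e1 e3 where X: "X = {e1, e3}" "e1 \<noteq> e3" using h(2) by (auto simp: card_2_iff)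
    have XE: "X \<subseteq> E" using col_sub[OF col h(1)] .
    have e1E: "e1 \<in> E" and e3E: "e3 \<in> E" using XE X(1) by auto
    obtain a b where ab: "e1 = {a,b}" using edges2D[OF e2 e1E] by metis
    obtain c d where cd: "e3 = {c,d}" using edges2D[OF e2 e3E] by metis
    have "x \<in> e1" "x \<in> e3" "y \<in> e1" "y \<in> e3" using h(3,4) X(1) by simp_all
    then show "x = y" by (rule common2[OF ab cd X(2)])
  qed
  define W where "W = {w\<in>V. \<exists>X\<in>P. card X = 2 \<and> (\<forall>e\<in>X. w\<in>e)}"
  define R where "R = (\<lambda>w w'. w' \<in> W \<and> w' \<noteq> w \<and>
      (\<exists>Y\<in>P. card Y = 2 \<and> (\<forall>e\<in>Y. w'\<in>e) \<and> {w,w'} \<in> Y))"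
  have succ: "\<exists>w'. R w w'" if wW: "w \<in> W" for w
  proof -
    obtain X where X: "X \<in> P" "card X = 2" "\<forall>e\<in>X. w\<in>e" and wV: "w \<in> V"
      using wW unfolding W_def by blast
    have XE: "X \<subseteq> E" using col_sub[OF col X(1)] .
    have "X \<subseteq> {e\<in>E. w\<in>e}" using XE X(3) by blast
    moreover have "{e\<in>E. w\<in>e} \<noteq> X" using nf wV X(1,2) by blast
    ultimately obtain g where g: "g \<in> E" "w \<in> g" "g \<notin> X" by blast
    then obtain Y where Y: "Y \<in> P" "g \<in> Y" using UP by blast
    then obtain w' where w': "w' \<in> V" "\<forall>e\<in>Y. w'\<in>e" using cen by blast
    have YX: "Y \<noteq> X" using Y g by blast
    have ww': "w' \<noteq> w"
    proof
      assume "w' = w"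
      then have "Y = X" using uniq wV Y(1) X(1) X(3) w'(2) by blast
      then show False using YX by simp
    qed
    obtain a b where ab: "a \<noteq> b" "g = {a,b}" using edges2D[OF e2 g(1)] by blast
    have gw: "g = {w, w'}" using edge_pair[OF ab(2) ab(1) g(2) _ ww'[symmetric]] w'(2) Y(2) by blast
    have cY: "card Y = 2"
    proof (rule ccontr)
      assume "card Y \<noteq> 2"
      moreover have "Y \<noteq> {}" using Y(1) neX by blast
      then have "card Y \<noteq> 0" using finX[OF Y(1)] by simp
      ultimately have "card Y = 1" using le2 Y(1) by force
      then obtain y where "Y = {y}" by (meson card_1_singletonE)
      then have "Y = {g}" using Y(2) by simp
      then have "\<forall>e\<in>Y. w\<in>e" using g(2) by simp
      then have "Y = X" using uniq wV Y(1) X(1) X(3) by blast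
      then show False using YX by simp
    qed
    have "w' \<in> W" unfolding W_def using w' Y(1) cY by blast
    then have "R w w'" unfolding R_def using ww' Y cY w'(2) gw by blast
    then show ?thesis by blast
  qed
  define f where "f = (\<lambda>w. SOME w'. R w w')"
  have fR: "R w (f w)" if "w \<in> W" for w unfolding f_def using succ[OF that] by (rule someI_ex)
  have fW: "\<forall>x\<in>W. f x \<in> W" using fR unfolding R_def by blast
  have key: "f v1 = f v2" if h: "v1 \<in> W" "v2 \<in> W" "X \<in> P" "{v1, f v1} \<in> X" "{v2, f v2} \<in> X"
    for v1 v2 X
  proof -
    obtain Y1 where Y1: "Y1 \<in> P" "card Y1 = 2" "\<forall>e\<in>Y1. f v1\<in>e" "{v1, f v1} \<in> Y1"
      using fR[OF h(1)] unfolding R_def by blast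
    obtain Y2 where Y2: "Y2 \<in> P" "card Y2 = 2" "\<forall>e\<in>Y2. f v2\<in>e" "{v2, f v2} \<in> Y2"
      using fR[OF h(2)] unfolding R_def by blast
    have "X = Y1" using col_eq[OF col h(3) Y1(1) h(4) Y1(4)] .
    moreover have "X = Y2" using col_eq[OF col h(3) Y2(1) h(5) Y2(4)] .
    ultimately show ?thesis using pcen[OF Y1(1) Y1(2) Y1(3)] Y2(3) by blast
  qed
  have finW: "finite W" unfolding W_def using finV by simp
  obtain X0 where X0: "X0 \<in> P" "card X0 = 2" using pair by blast
  then obtain w0 where "w0 \<in> V" "\<forall>e\<in>X0. w0\<in>e" using cen by blast
  then have w0W: "w0 \<in> W" unfolding W_def using X0 by blast
  obtain w p where wp: "w \<in> W" "0 < p" "(f^^p) w = w" and mn: "\<forall>q. 0<q \<longrightarrow> q<p \<longrightarrow> (f^^q) w \<noteq> w"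
    using periodic[OF finW w0W fW] by blast
  have itW: "\<And>i. (f^^i) w \<in> W"
  proof -
    fix i show "(f^^i) w \<in> W" by (induction i) (use wp(1) fW in auto)
  qed
  define vs where "vs = map (\<lambda>i. (f^^i) w) [0..<p]"
  have lvs: "length vs = p" unfolding vs_def by simp
  have nvs: "\<And>i. i < p \<Longrightarrow> vs ! i = (f^^i) w" unfolding vs_def by simp
  have dvs: "distinct vs" unfolding vs_def using period_distinct[OF wp(3) mn] .
  have nxt: "\<And>i. i < p \<Longrightarrow> vs ! ((i+1) mod p) = f (vs ! i)"
  proof -
    fix i assume ip: "i < p"
    have "(i+1) mod p < p" using wp(2) by simp
    then show "vs ! ((i+1) mod p) = f (vs ! i)" using nvs ip period_next[OF wp(3) ip] by simp
  qed
  have fw: "f w \<noteq> w" using fR[OF wp(1)] unfolding R_def by blast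
  have p1: "p \<noteq> 1" using wp(3) fw by auto
  have p2: "p \<noteq> 2"
  proof
    assume "p = 2"
    then have ffw: "f (f w) = w" using wp(3) by (simp add: numeral_2_eq_2)
    obtain Y1 where Y1: "Y1 \<in> P" "{w, f w} \<in> Y1"
      using fR[OF wp(1)] unfolding R_def by blast
    have "{f w, f (f w)} \<in> Y1" using Y1(2) ffw by (simp add: insert_commute)
    then have "f w = f (f w)" using key[OF wp(1) fW[rule_format, OF wp(1)] Y1(1) Y1(2)] by blast
    then show False using ffw fw by simp
  qed
  have p3: "3 \<le> length vs" using lvs wp(2) p1 p2 by linarith
  define C where "C = cycle_edges vs"
  have Cform: "\<And>c. c \<in> C \<Longrightarrow> \<exists>i<p. c = {vs!i, f (vs!i)}"
    unfolding C_def cycle_edges_def lvs using nxt by auto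
  have CE: "C \<subseteq> E"
  proof
    fix c assume "c \<in> C"
    then obtain i where i: "i < p" "c = {vs!i, f (vs!i)}" using Cform by blast
    have "vs!i \<in> W" using nvs[OF i(1)] itW by simp
    then obtain Y where "Y \<in> P" "{vs!i, f (vs!i)} \<in> Y" using fR unfolding R_def by blast
    then show "c \<in> E" using i(2) col_sub[OF col] by blast
  qed
  have cyc: "is_cycle E C" unfolding is_cycle_def using dvs p3 CE unfolding C_def by blast
  have finC: "finite C" using CE finE finite_subset by blast
  have "\<forall>X\<in>P. card (C \<inter> X) \<le> 1"
  proof
    fix X assume XP: "X \<in> P"
    have "\<forall>c1\<in>C \<inter> X. \<forall>c2\<in>C \<inter> X. c1 = c2"
    proof (intro ballI)
      fix c1 c2 assume c1: "c1 \<in> C \<inter> X" and c2: "c2 \<in> C \<inter> X"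
      obtain i where i: "i < p" "c1 = {vs!i, f (vs!i)}" using Cform c1 by blast
      obtain j where j: "j < p" "c2 = {vs!j, f (vs!j)}" using Cform c2 by blast
      have "vs!i \<in> W" "vs!j \<in> W" using nvs i(1) j(1) itW by simp_all
      then have "f (vs!i) = f (vs!j)" using key[OF _ _ XP] c1 c2 i(2) j(2) by blast
      then have "vs ! ((i+1) mod p) = vs ! ((j+1) mod p)" using nxt i(1) j(1) by simp
      moreover have "(i+1) mod p < length vs" "(j+1) mod p < length vs" using lvs wp(2) by simp_all
      ultimately have "(i+1) mod p = (j+1) mod p" using dvs nth_eq_iff_index_eq by blast
      then have "i = j" using i(1) j(1) suc_mod_inj by blast
      then show "c1 = c2" using i j by simp
    qed
    then show "card (C \<inter> X) \<le> 1" using finC card_le_Suc0_iff_eq[of "C \<inter> X"] by simp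
  qed
  then show False using rf cyc unfolding rainbow_circuit_free_def by blast
qed



lemma forward:
  "card V = n \<Longrightarrow> simple_graph V E \<Longrightarrow> card E + 3 = 2 * card V \<Longrightarrow> coloring E P \<Longrightarrow>
   rainbow_circuit_free E P \<Longrightarrow> \<forall>X\<in>P. card X \<le> 2 \<Longrightarrow> H0_constructible V E"
proof (induction n arbitrary: V E P rule: less_induct)
  case (less n)
  note sg = less.prems(2) and ce = less.prems(3) and col = less.prems(4)
    and rf = less.prems(5) and le2 = less.prems(6)
  have finV: "finite V" and finE: "finite E" and eV: "\<And>e. e \<in> E \<Longrightarrow> e \<subseteq> V"
    and e2: "edges2 E" using sg_facts[OF sg] by auto
  have UP: "\<Union>P = E" and neX: "{} \<notin> P" and dj: "\<forall>X\<in>P. \<forall>Y\<in>P. X \<noteq> Y \<longrightarrow> X \<inter> Y = {}"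
    using col unfolding coloring_def by auto
  have finP: "finite P" using col_fin[OF col finE] .
  have finX: "\<And>X. X \<in> P \<Longrightarrow> finite X" using col_sub[OF col] finE finite_subset by blast
  show ?case
  proof (cases "card V = 2")
    case True
    then have "card E = 1" using ce by simp
    then obtain e where E: "E = {e}" by (meson card_1_singletonE)
    then have eE: "e \<in> E" by simp
    obtain a b where ab: "a \<noteq> b" "e = {a,b}" using edges2D[OF e2 eE] by metis
    have "{a,b} \<subseteq> V" using eV[OF eE] ab by simp
    moreover have "card {a,b} = card V" using ab True by simp
    ultimately have "{a,b} = V" using finV card_subset_eq by blast
    then show ?thesis using E ab H0_constructible.K2[of a b] by simp
  next
    case False
    then have V3: "3 \<le> card V" using ce by linarith
    note cnt = counting[OF sg col rf le2 ce]
    have pair: "\<exists>X\<in>P. card X = 2"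
    proof (rule ccontr)
      assume "\<not> (\<exists>X\<in>P. card X = 2)"
      then have "\<forall>X\<in>P. card X \<le> 1" using le2 by force
      then have "sum card P \<le> sum (\<lambda>_. 1) P" by (intro sum_mono) auto
      moreover have "card E \<le> sum card P" using card_Union_le_sum_card[of P] UP by simp
      ultimately have "card E \<le> card P" by simp
      then show False using cnt(3) ce V3 by linarith
    qed
    obtain w X where wX: "w \<in> V" "X \<in> P" "card X = 2" "{e\<in>E. w\<in>e} = X"
      using find_vertex[OF sg col rf le2 cnt(1) cnt(2) pair] by blast
    obtain e1 e3 where X: "X = {e1, e3}" "e1 \<noteq> e3" using wX(3) by (auto simp: card_2_iff)
    have e1: "e1 \<in> E" "w \<in> e1" using wX(4) X(1) by auto
    have e3: "e3 \<in> E" "w \<in> e3" using wX(4) X(1) by auto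
    obtain p q where "p \<noteq> q" "e1 = {p,q}" using edges2D[OF e2 e1(1)] by metis
    then obtain u where u: "u \<noteq> w" "e1 = {w,u}" using edge_other e1(2) by metis
    obtain p' q' where "p' \<noteq> q'" "e3 = {p',q'}" using edges2D[OF e2 e3(1)] by metis
    then obtain v where v: "v \<noteq> w" "e3 = {w,v}" using edge_other e3(2) by metis
    have uv: "u \<noteq> v" using u v X(2) by auto
    define V' where "V' = V - {w}"
    define E' where "E' = E - X"
    define P' where "P' = P - {X}"
    have XE: "X \<subseteq> E" using col_sub[OF col wX(2)] .
    have wnot: "\<And>e. e \<in> E' \<Longrightarrow> w \<notin> e" unfolding E'_def using wX(4) by blast
    have sg': "simple_graph V' E'" unfolding simple_graph_def
    proof
      show "finite V'" unfolding V'_def using finV by simp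
      show "\<forall>e\<in>E'. \<exists>u v. u \<in> V' \<and> v \<in> V' \<and> u \<noteq> v \<and> e = {u, v}"
      proof
        fix e assume eE': "e \<in> E'"
        then have eE: "e \<in> E" unfolding E'_def by simp
        obtain a b where ab: "a \<noteq> b" "e = {a,b}" using edges2D[OF e2 eE] by metis
        have "a \<in> V" "b \<in> V" using eV[OF eE] ab by auto
        moreover have "a \<noteq> w" "b \<noteq> w" using wnot[OF eE'] ab by auto
        ultimately have "a \<in> V'" "b \<in> V'" unfolding V'_def by auto
        then show "\<exists>u v. u \<in> V' \<and> v \<in> V' \<and> u \<noteq> v \<and> e = {u, v}" using ab by blast
      qed
    qed
    have cV': "card V' = card V - 1" unfolding V'_def using wX(1) finV by simp
    have cE': "card E' = card E - 2" unfolding E'_def using card_Diff_subset[OF finX[OF wX(2)] XE] wX(3)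
      by simp
    have ce': "card E' + 3 = 2 * card V'" using cV' cE' ce V3 by linarith
    have col': "coloring E' P'" unfolding coloring_def
    proof (intro conjI)
      show "\<Union>P' = E'"
      proof
        show "\<Union>P' \<subseteq> E'"
        proof
          fix c assume "c \<in> \<Union>P'"
          then obtain Y where Y: "Y \<in> P" "Y \<noteq> X" "c \<in> Y" unfolding P'_def by blast
          then have "c \<notin> X" using dj wX(2) by blast
          moreover have "c \<in> E" using Y UP by blast
          ultimately show "c \<in> E'" unfolding E'_def by simp
        qed
        show "E' \<subseteq> \<Union>P'"
        proof
          fix c assume "c \<in> E'"
          then have "c \<in> E" "c \<notin> X" unfolding E'_def by auto
          then obtain Y where "Y \<in> P" "c \<in> Y" using UP by blast
          then show "c \<in> \<Union>P'" unfolding P'_def using \<open>c \<notin> X\<close> by blast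
        qed
      qed
      show "{} \<notin> P'" using neX unfolding P'_def by simp
      show "\<forall>X\<in>P'. \<forall>Y\<in>P'. X \<noteq> Y \<longrightarrow> X \<inter> Y = {}" using dj unfolding P'_def by simp
    qed
    have rf': "rainbow_circuit_free E' P'" unfolding rainbow_circuit_free_def
    proof
      assume "\<exists>C. is_cycle E' C \<and> (\<forall>Y\<in>P'. card (C \<inter> Y) \<le> 1)"
      then obtain C where C: "is_cycle E' C" "\<forall>Y\<in>P'. card (C \<inter> Y) \<le> 1" by blast
      have CE': "C \<subseteq> E'" using C(1) unfolding is_cycle_def by blast
      have "is_cycle E C" using C(1) unfolding is_cycle_def E'_def by blast
      moreover have "\<forall>Y\<in>P. card (C \<inter> Y) \<le> 1"
      proof
        fix Y assume "Y \<in> P"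
        show "card (C \<inter> Y) \<le> 1"
        proof (cases "Y = X")
          case True
          then have "C \<inter> Y = {}" using CE' unfolding E'_def by blast
          then show ?thesis by simp
        next
          case False
          then show ?thesis using C(2) \<open>Y \<in> P\<close> unfolding P'_def by simp
        qed
      qed
      ultimately show False using rf unfolding rainbow_circuit_free_def by blast
    qed
    have le2': "\<forall>X\<in>P'. card X \<le> 2" using le2 unfolding P'_def by simp
    have "card V' < n" using cV' less.prems(1) V3 by simp
    then have IH: "H0_constructible V' E'" using less.IH sg' ce' col' rf' le2' by blast
    have uV': "u \<in> V'" using eV[OF e1(1)] u unfolding V'_def by auto
    have vV': "v \<in> V'" using eV[OF e3(1)] v unfolding V'_def by auto
    have "H0_constructible (insert w V') (E' \<union> {{u, w}, {v, w}})"
      using H0_constructible.H0[OF IH uV' vV' uv, of w] unfolding V'_def by blast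
    moreover have "insert w V' = V" unfolding V'_def using wX(1) by auto
    moreover have "E' \<union> {{u, w}, {v, w}} = E"
    proof -
      have "{{u, w}, {v, w}} = X" using X(1) u(2) v(2) by (simp add: insert_commute)
      then show ?thesis unfolding E'_def using XE by auto
    qed
    ultimately show ?thesis by simp
  qed
qed



lemma H0_edges: "H0_constructible V E \<Longrightarrow> \<forall>e\<in>E. e \<subseteq> V"
  by (induction rule: H0_constructible.induct) auto

lemma cyc_mem: "i < length vs \<Longrightarrow> {vs!i, vs!((i+1) mod length vs)} \<in> cycle_edges vs"
  unfolding cycle_edges_def by blast

lemma cyc_two:
  assumes d: "distinct vs" and l: "3 \<le> length vs"
  shows "{vs!0, vs!1} \<in> cycle_edges vs" "{vs!1, vs!2} \<in> cycle_edges vs"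
    "{vs!0, vs!1} \<noteq> {vs!1, vs!2}"
proof -
  have l2: "2 < length vs" "1 < length vs" "0 < length vs" using l by linarith+
  have "{vs!0, vs!((0+1) mod length vs)} \<in> cycle_edges vs" using cyc_mem[OF l2(3)] by simp
  then show "{vs!0, vs!1} \<in> cycle_edges vs" using l by simp
  have "{vs!1, vs!((1+1) mod length vs)} \<in> cycle_edges vs" using cyc_mem[OF l2(2)] by simp
  then show "{vs!1, vs!2} \<in> cycle_edges vs" using l by (simp add: numeral_2_eq_2)
  have dd: "\<forall>i<length vs. \<forall>j<length vs. i \<noteq> j \<longrightarrow> vs!i \<noteq> vs!j" using d by (simp add: distinct_conv_nth)
  have "vs!0 \<noteq> vs!2" using dd[rule_format, OF l2(3) l2(1)] by simp
  have "vs!0 \<noteq> vs!1" using dd[rule_format, OF l2(3) l2(2)] by simp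
  then show "{vs!0, vs!1} \<noteq> {vs!1, vs!2}" using \<open>vs!0 \<noteq> vs!2\<close> by (metis insert_iff singletonD)
qed

lemma backward:
  "H0_constructible V E \<Longrightarrow> \<exists>P. coloring E P \<and> rainbow_circuit_free E P \<and> (\<forall>X\<in>P. card X \<le> 2)"
proof (induction rule: H0_constructible.induct)
  case (K2 u v)
  have "coloring {{u, v}} {{{u, v}}}" unfolding coloring_def by simp
  moreover have "rainbow_circuit_free {{u, v}} {{{u, v}}}" unfolding rainbow_circuit_free_def
  proof
    assume "\<exists>C. is_cycle {{u, v}} C \<and> (\<forall>X\<in>{{{u, v}}}. card (C \<inter> X) \<le> 1)"
    then obtain vs where vs: "distinct vs" "3 \<le> length vs" "cycle_edges vs \<subseteq> {{u,v}}"
      unfolding is_cycle_def by blast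
    have "{vs!0, vs!1} \<in> {{u,v}}" using cyc_two(1)[OF vs(1,2)] vs(3) by (rule subsetD[rotated])
    moreover have "{vs!1, vs!2} \<in> {{u,v}}" using cyc_two(2)[OF vs(1,2)] vs(3) by (rule subsetD[rotated])
    ultimately have "{vs!0, vs!1} = {u,v}" "{vs!1, vs!2} = {u,v}" by simp_all
    then show False using cyc_two(3)[OF vs(1,2)] by simp
  qed
  moreover have "\<forall>X\<in>{{{u, v}}}. card X \<le> 2" by simp
  ultimately show ?case by blast
next
  case (H0 V E u v z)
  obtain P where P: "coloring E P" "rainbow_circuit_free E P" "\<forall>X\<in>P. card X \<le> 2"
    using H0.IH by blast
  have eV: "\<forall>e\<in>E. e \<subseteq> V" using H0_edges[OF H0.hyps(1)] .
  define A where "A = {{u, z}, {v, z}}"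
  have zE: "\<And>e. e \<in> E \<Longrightarrow> z \<notin> e" using eV H0.hyps(5) by blast
  have AE: "A \<inter> E = {}" unfolding A_def using zE by auto
  have uzvz: "{u, z} \<noteq> {v, z}" using H0.hyps(4) by (metis doubleton_eq_iff)
  have Pc: "\<Union>P = E" "{} \<notin> P" "\<forall>X\<in>P. \<forall>Y\<in>P. X \<noteq> Y \<longrightarrow> X \<inter> Y = {}"
    using P(1) unfolding coloring_def by auto
  define P' where "P' = insert A P"
  have AnP: "A \<notin> P" using AE Pc(1) unfolding A_def by blast
  have col': "coloring (E \<union> {{u, z}, {v, z}}) P'" unfolding coloring_def
  proof (intro conjI)
    show "\<Union>P' = E \<union> {{u, z}, {v, z}}" unfolding P'_def A_def using Pc(1) by auto
    show "{} \<notin> P'" unfolding P'_def A_def using Pc(2) by simp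
    show "\<forall>X\<in>P'. \<forall>Y\<in>P'. X \<noteq> Y \<longrightarrow> X \<inter> Y = {}"
    proof (intro ballI impI)
      fix X Y assume "X \<in> P'" "Y \<in> P'" "X \<noteq> Y"
      moreover have "\<And>X. X \<in> P \<Longrightarrow> X \<inter> A = {}" using AE Pc(1) by blast
      ultimately show "X \<inter> Y = {}" unfolding P'_def using Pc(3) by blast
    qed
  qed
  have cA: "card A \<le> 2" unfolding A_def by (simp add: card_insert_if)
  have rf': "rainbow_circuit_free (E \<union> {{u, z}, {v, z}}) P'" unfolding rainbow_circuit_free_def
  proof
    assume "\<exists>C. is_cycle (E \<union> {{u, z}, {v, z}}) C \<and> (\<forall>X\<in>P'. card (C \<inter> X) \<le> 1)"
    then obtain vs where vs: "distinct vs" "3 \<le> length vs" "cycle_edges vs \<subseteq> E \<union> A"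
      and rb: "\<forall>X\<in>P'. card (cycle_edges vs \<inter> X) \<le> 1"
      unfolding is_cycle_def A_def by blast
    define n where "n = length vs"
    show False
    proof (cases "z \<in> set vs")
      case True
      then obtain i where i: "i < n" "vs!i = z" unfolding n_def by (auto simp: in_set_conv_nth)
      define j where "j = (if i = 0 then n - 1 else i - 1)"
      have jn: "j < n" unfolding j_def using i(1) by auto
      have ji: "(j + 1) mod n = i"
      proof (cases "i = 0")
        case True
        then have "j + 1 = n" unfolding j_def using i(1) by simp
        then show ?thesis using True by simp
      next
        case False
        then have "j + 1 = i" unfolding j_def by simp
        then show ?thesis using i(1) by simp
      qed
      define k where "k = (i + 1) mod n"
      have kn: "k < n" unfolding k_def using i(1) by simp
      have kj: "k \<noteq> j" unfolding k_def j_def using i(1) vs(2) n_def by (auto simp: mod_if)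
      have ki: "k \<noteq> i" unfolding k_def using i(1) vs(2) n_def by (auto simp: mod_if)
      have ij: "j \<noteq> i" unfolding j_def using i(1) vs(2) n_def by auto
      define c1 where "c1 = {vs!i, vs!k}"
      define c2 where "c2 = {vs!j, vs!i}"
      have c1C: "c1 \<in> cycle_edges vs" unfolding c1_def k_def n_def
        using cyc_mem[of i vs] i(1) n_def by simp
      have c2C: "c2 \<in> cycle_edges vs" unfolding c2_def
        using cyc_mem[of j vs] jn ji n_def by simp
      have "c1 \<noteq> c2"
      proof
        assume "c1 = c2"
        moreover have "vs!k \<noteq> vs!j" "vs!k \<noteq> vs!i" "vs!j \<noteq> vs!i"
          using vs(1) kn jn i(1) kj ki ij n_def by (simp_all add: nth_eq_iff_index_eq)
        ultimately show False unfolding c1_def c2_def by (metis doubleton_eq_iff)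
      qed
      moreover have "c1 \<in> A" using c1C vs(3) zE i(2) unfolding c1_def by blast
      moreover have "c2 \<in> A" using c2C vs(3) zE i(2) unfolding c2_def by blast
      ultimately have "{c1, c2} \<subseteq> cycle_edges vs \<inter> A" using c1C c2C by blast
      moreover have "finite (cycle_edges vs \<inter> A)" unfolding A_def by simp
      ultimately have "card {c1, c2} \<le> card (cycle_edges vs \<inter> A)" by (rule card_mono[rotated])
      moreover have "card (cycle_edges vs \<inter> A) \<le> 1" using rb unfolding P'_def by simp
      ultimately show False using \<open>c1 \<noteq> c2\<close> by simp
    next
      case False
      have "cycle_edges vs \<subseteq> E"
      proof
        fix c assume cC: "c \<in> cycle_edges vs"
        then obtain i where i: "i < length vs" "c = {vs!i, vs!((i+1) mod length vs)}"
          unfolding cycle_edges_def by blast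
        have "vs!i \<in> set vs" using i(1) by simp
        moreover have "(i+1) mod length vs < length vs" using i(1) by (intro mod_less_divisor) linarith
        then have "vs!((i+1) mod length vs) \<in> set vs" by (rule nth_mem)
        ultimately have "vs!i \<in> set vs" "vs!((i+1) mod length vs) \<in> set vs" by simp_all
        then have "z \<notin> c" using False i(2) by auto
        moreover have "c \<in> E \<union> A" using cC vs(3) by blast
        ultimately show "c \<in> E" unfolding A_def by auto
      qed
      then have "is_cycle E (cycle_edges vs)" unfolding is_cycle_def using vs(1,2) by blast
      moreover have "\<forall>X\<in>P. card (cycle_edges vs \<inter> X) \<le> 1" using rb unfolding P'_def by simp
      ultimately show False using P(2) unfolding rainbow_circuit_free_def by blast
    qed
  qed
  have "\<forall>X\<in>P'. card X \<le> 2" unfolding P'_def using P(3) cA by simp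
  then show ?case using col' rf' by blast
qed


theorem theorem10:
  fixes V :: "'a set" and E :: "'a set set"
  assumes "simple_graph V E"
    and "card E + 3 = 2 * card V"
  shows "(\<exists>P. coloring E P \<and> rainbow_circuit_free E P \<and> (\<forall>X\<in>P. card X \<le> 2))
         \<longleftrightarrow> H0_constructible V E"
proof
  assume "\<exists>P. coloring E P \<and> rainbow_circuit_free E P \<and> (\<forall>X\<in>P. card X \<le> 2)"
  then obtain P where P: "coloring E P" "rainbow_circuit_free E P" "\<forall>X\<in>P. card X \<le> 2" by blast
  show "H0_constructible V E" using forward[OF refl assms(1) assms(2) P(1) P(2) P(3)] .
next
  assume "H0_constructible V E"
  then show "\<exists>P. coloring E P \<and> rainbow_circuit_free E P \<and> (\<forall>X\<in>P. card X \<le> 2)"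
    by (rule backward)
qed

end
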